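(* If a simplicial complex $\mathcal{C}$ is nuclear, then its Alexander dual $\mathcal{C}^*$ is nuclear.
   Context: A simplicial complex on a finite ground set $V$ is a family of subsets of $V$ closed under subsets (the void complex $\{\}$ and $\{\emptyset\}$ allowed); facets are inclusion-maximal faces; complexes are considered up to isomorphism (bijection of ground sets carrying faces to faces). Alexander dual: $\mathcal{C}^*=\{S\subseteq V: V\setminus S\notin\mathcal{C}\}$ on $V$. $\Delta_k$ ($k\ge0$): complex on a $(k+1)$-set with that set as only facet; $\Delta_{-1}=\{\emptyset\}$, $\Delta_{-2}=\{\}$ on the empty set. $\sqcup$: disjoint union. $D_{m,n}=(\Delta_m\sqcup\Delta_n)^*$. $\operatorname{cone}^p(\mathcal{D})$: add $p$ new vertices $u_1,\dots,u_p$, facets $F\cup\{u_1,\dots,u_p\}$ ($\operatorname{cone}^0(\mathcal{D})=\mathcal{D}$). $G(\mathcal{D})$: $\mathcal{D}$ with one new ground-set element lying in no face. For $\mathcal{D}$ on $[n]$, $\Lambda(\mathcal{D})$ is the complex on $[n+1]$ with facets $[n]$ and $F\cup\{n+1\}$, $F$ a facet of $\mathcal{D}$. A complex is nuclear if it is (isomorphic to) one of: $\Lambda(\mathcal{D})$ with $\mathcal{D}$ nuclear; $G(\mathcal{D})$ with $\mathcal{D}$ nuclear; $\operatorname{cone}^p(\Delta_m\sqcup\Delta_n)$, $p,m,n\ge0$; $\operatorname{cone}^p(D_{m,n})$, $p\ge0$, $m,n\ge1$; $\Delta_k$, $k\ge-2$. *)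

theory Defs
  imports Main
begin

text \<open>Complexes are considered up to isomorphism; since they are finite, taking
  nat as ground type loses nothing.\<close>

definition is_complex :: "nat set \<Rightarrow> nat set set \<Rightarrow> bool" where
  "is_complex V C \<longleftrightarrow> finite V \<and> (\<forall>F\<in>C. F \<subseteq> V) \<and> (\<forall>F\<in>C. \<forall>G. G \<subseteq> F \<longrightarrow> G \<in> C)"

definition facets :: "nat set set \<Rightarrow> nat set set" where
  "facets C = {F \<in> C. \<forall>G\<in>C. F \<subseteq> G \<longrightarrow> G = F}"

definition gen_complex :: "nat set set \<Rightarrow> nat set set" where
  "gen_complex Fs = {G. \<exists>F\<in>Fs. G \<subseteq> F}"

definition alex_dual :: "nat set \<Rightarrow> nat set set \<Rightarrow> nat set set" where
  "alex_dual V C = {S. S \<subseteq> V \<and> V - S \<notin> C}"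

definition complex_iso :: "nat set \<Rightarrow> nat set set \<Rightarrow> nat set \<Rightarrow> nat set set \<Rightarrow> bool" where
  "complex_iso V C W D \<longleftrightarrow> (\<exists>f. bij_betw f V W \<and> D = (\<lambda>F. f ` F) ` C)"

text \<open>cone^p: add the (disjoint, p-element) vertex set U; facets F \<union> U.\<close>
definition cone_on :: "nat set set \<Rightarrow> nat set \<Rightarrow> nat set set" where
  "cone_on C U = gen_complex {F \<union> U | F. F \<in> facets C}"

definition Lambda_on :: "nat set \<Rightarrow> nat set set \<Rightarrow> nat \<Rightarrow> nat set set" where
  "Lambda_on V C v = gen_complex (insert V {insert v F | F. F \<in> facets C})"

text \<open>\<Delta>_m \<squnion> \<Delta>_n realised on {0..m+n+1}.\<close>
definition disj_simplices_ground :: "nat \<Rightarrow> nat \<Rightarrow> nat set" where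
  "disj_simplices_ground m n = {0..m+n+1}"

definition disj_simplices :: "nat \<Rightarrow> nat \<Rightarrow> nat set set" where
  "disj_simplices m n = Pow {0..m} \<union> Pow {m+1..m+n+1}"

definition D_complex :: "nat \<Rightarrow> nat \<Rightarrow> nat set set" where
  "D_complex m n = alex_dual (disj_simplices_ground m n) (disj_simplices m n)"

definition cone_vertices :: "nat \<Rightarrow> nat \<Rightarrow> nat \<Rightarrow> nat set" where
  "cone_vertices m n p = {m+n+2..<m+n+2+p}"

inductive nuclear :: "nat set \<Rightarrow> nat set set \<Rightarrow> bool" where
  iso: "nuclear V C \<Longrightarrow> complex_iso V C W D \<Longrightarrow> nuclear W D"
| Lambda: "nuclear V C \<Longrightarrow> v \<notin> V \<Longrightarrow> nuclear (insert v V) (Lambda_on V C v)"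
| G: "nuclear V C \<Longrightarrow> v \<notin> V \<Longrightarrow> nuclear (insert v V) C"
| cone_disj: "nuclear (disj_simplices_ground m n \<union> cone_vertices m n p)
      (cone_on (disj_simplices m n) (cone_vertices m n p))"
| cone_D: "m \<ge> 1 \<Longrightarrow> n \<ge> 1 \<Longrightarrow> nuclear (disj_simplices_ground m n \<union> cone_vertices m n p)
      (cone_on (D_complex m n) (cone_vertices m n p))"
| simplex: "nuclear {0..k} (Pow {0..k})"
| empty_simplex: "nuclear {} {{}}"
| void: "nuclear {} {}"

end

theory Submission
  imports Defs
begin

lemma facet_exists:
  assumes "finite V" "X \<subseteq> Pow V" "T \<in> X"
  shows "\<exists>F\<in>facets X. T \<subseteq> F"
proof -
  have "finite X" using assms(1,2) finite_subset by blast
  from finite_has_maximal2[OF this assms(3)] obtain m where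
    "m \<in> X" "T \<subseteq> m" "\<forall>b\<in>X. m \<subseteq> b \<longrightarrow> m = b" by auto
  then show ?thesis unfolding facets_def by auto
qed

lemma facets_sub: "facets X \<subseteq> X" unfolding facets_def by auto

lemma Lambda_char:
  assumes "is_complex V X" "v \<notin> V"
  shows "Lambda_on V X v = {S. S \<subseteq> insert v V \<and> (v \<notin> S \<or> S - {v} \<in> X)}"
proof (rule set_eqI, rule iffI)
  fix S assume "S \<in> Lambda_on V X v"
  then consider "S \<subseteq> V" | F where "F \<in> facets X" "S \<subseteq> insert v F"
    unfolding Lambda_on_def gen_complex_def by auto
  then show "S \<in> {S. S \<subseteq> insert v V \<and> (v \<notin> S \<or> S - {v} \<in> X)}"
  proof cases
    case 1 then show ?thesis using assms by auto
  next
    case 2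
    then have "F \<in> X" using facets_sub by auto
    moreover have "S - {v} \<subseteq> F" using 2 by auto
    moreover have sub: "\<forall>F\<in>X. F \<subseteq> V" and down: "\<forall>F\<in>X. \<forall>G. G \<subseteq> F \<longrightarrow> G \<in> X"
      using assms(1) unfolding is_complex_def by auto
    ultimately have "F \<subseteq> V" "S - {v} \<in> X" by auto
    then show ?thesis using 2 by auto
  qed
next
  fix S assume S: "S \<in> {S. S \<subseteq> insert v V \<and> (v \<notin> S \<or> S - {v} \<in> X)}"
  show "S \<in> Lambda_on V X v"
  proof (cases "v \<in> S")
    case False then show ?thesis using S unfolding Lambda_on_def gen_complex_def by auto
  next
    case True
    then have "S - {v} \<in> X" using S by auto
    then obtain F where "F \<in> facets X" "S - {v} \<subseteq> F"
      using facet_exists[of V X "S - {v}"] assms(1) unfolding is_complex_def by auto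
    then have "S \<subseteq> insert v F" by auto
    moreover have "insert v F \<in> insert V {insert v F | F. F \<in> facets X}" using \<open>F \<in> facets X\<close> by blast
    ultimately show ?thesis unfolding Lambda_on_def gen_complex_def by blast
  qed
qed

lemma cone_char:
  assumes "is_complex V X"
  shows "cone_on X U = {S. S \<subseteq> V \<union> U \<and> S - U \<in> X}"
proof (rule set_eqI, rule iffI)
  fix S assume "S \<in> cone_on X U"
  then obtain F where F: "F \<in> facets X" "S \<subseteq> F \<union> U"
    unfolding cone_on_def gen_complex_def by auto
  then have "F \<in> X" using facets_sub by auto
  moreover have "S - U \<subseteq> F" using F by auto
  moreover have sub: "\<forall>F\<in>X. F \<subseteq> V" and down: "\<forall>F\<in>X. \<forall>G. G \<subseteq> F \<longrightarrow> G \<in> X"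
    using assms(1) unfolding is_complex_def by auto
  ultimately have "F \<subseteq> V" "S - U \<in> X" by auto
  then show "S \<in> {S. S \<subseteq> V \<union> U \<and> S - U \<in> X}" using F by auto
next
  fix S assume S: "S \<in> {S. S \<subseteq> V \<union> U \<and> S - U \<in> X}"
  then obtain F where "F \<in> facets X" "S - U \<subseteq> F"
    using facet_exists[of V X "S - U"] assms(1) unfolding is_complex_def by auto
  then have "F \<union> U \<in> {F \<union> U | F. F \<in> facets X}" "S \<subseteq> F \<union> U" by blast+
  then show "S \<in> cone_on X U" unfolding cone_on_def gen_complex_def by blast
qed

lemma dual_complex:
  assumes "is_complex V X" shows "is_complex V (alex_dual V X)"
  unfolding is_complex_def
proof (intro conjI ballI allI impI)
  show "finite V" using assms unfolding is_complex_def by simp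
next
  fix F assume "F \<in> alex_dual V X" then show "F \<subseteq> V" unfolding alex_dual_def by simp
next
  fix F G assume F: "F \<in> alex_dual V X" and G: "G \<subseteq> F"
  have "V - F \<subseteq> V - G" using G by auto
  moreover have "V - F \<notin> X" using F unfolding alex_dual_def by simp
  ultimately have "V - G \<notin> X" using assms unfolding is_complex_def by blast
  then show "G \<in> alex_dual V X" using F G unfolding alex_dual_def by auto
qed

lemma dual_dual:
  assumes "is_complex V X" shows "alex_dual V (alex_dual V X) = X"
  using assms unfolding is_complex_def alex_dual_def
  by (auto simp: double_diff)

lemma dual_cone:
  assumes "is_complex V X" "V \<inter> U = {}"
  shows "alex_dual (V \<union> U) (cone_on X U) = cone_on (alex_dual V X) U"
proof -
  have "alex_dual (V \<union> U) (cone_on X U) = {S. S \<subseteq> V \<union> U \<and> ((V \<union> U) - S) - U \<notin> X}"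
    unfolding cone_char[OF assms(1)] alex_dual_def by auto
  also have "\<dots> = {S. S \<subseteq> V \<union> U \<and> S - U \<in> alex_dual V X}"
  proof -
    have "\<And>S. ((V \<union> U) - S) - U = V - (S - U)" using assms(2) by auto
    then show ?thesis unfolding alex_dual_def by auto
  qed
  finally show ?thesis unfolding cone_char[OF dual_complex[OF assms(1)]] .
qed

lemma dual_Lambda:
  assumes "is_complex V X" "v \<notin> V"
  shows "alex_dual (insert v V) (Lambda_on V X v) = alex_dual V X"
proof (rule set_eqI)
  fix S
  have mem: "R \<in> Lambda_on V X v \<longleftrightarrow> R \<subseteq> insert v V \<and> (v \<notin> R \<or> R - {v} \<in> X)" for R
    unfolding Lambda_char[OF assms] by simp
  have d: "S \<in> alex_dual W Y \<longleftrightarrow> S \<subseteq> W \<and> W - S \<notin> Y" for W Y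
    unfolding alex_dual_def by simp
  show "S \<in> alex_dual (insert v V) (Lambda_on V X v) \<longleftrightarrow> S \<in> alex_dual V X"
  proof (cases "v \<in> S")
    case True
    have "insert v V - S \<in> Lambda_on V X v" unfolding mem using True by blast
    moreover have "\<not> S \<subseteq> V" using True assms(2) by blast
    ultimately show ?thesis unfolding d by blast
  next
    case False
    have e: "insert v V - S - {v} = V - S" using assms(2) by blast
    have v: "v \<in> insert v V - S" using False by blast
    have "insert v V - S \<in> Lambda_on V X v \<longleftrightarrow> V - S \<in> X" unfolding mem e using v by blast
    moreover have "S \<subseteq> insert v V \<longleftrightarrow> S \<subseteq> V" using False by blast
    ultimately show ?thesis unfolding d by blast
  qed
qed

lemma dual_G:
  assumes "is_complex V X" "v \<notin> V"
  shows "alex_dual (insert v V) X = Lambda_on V (alex_dual V X) v"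
proof (rule set_eqI)
  fix S
  have mem: "R \<in> Lambda_on V (alex_dual V X) v \<longleftrightarrow> R \<subseteq> insert v V \<and> (v \<notin> R \<or> R - {v} \<in> alex_dual V X)" for R
    unfolding Lambda_char[OF dual_complex[OF assms(1)] assms(2)] by simp
  have d: "S \<in> alex_dual W Y \<longleftrightarrow> S \<subseteq> W \<and> W - S \<notin> Y" for W Y S
    unfolding alex_dual_def by simp
  show "S \<in> alex_dual (insert v V) X \<longleftrightarrow> S \<in> Lambda_on V (alex_dual V X) v"
  proof (cases "v \<in> S")
    case True
    then have e1: "insert v V - S = V - (S - {v})" using assms(2) by blast
    have "S \<subseteq> insert v V \<longleftrightarrow> S - {v} \<subseteq> V" by blast
    then show ?thesis unfolding mem d e1 using True by blast
  next
    case False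
    have sub: "\<forall>F\<in>X. F \<subseteq> V" using assms(1) unfolding is_complex_def by simp
    have vin: "v \<in> insert v V - S" using False by simp
    have e2: "insert v V - S \<notin> X"
    proof
      assume "insert v V - S \<in> X"
      then have "insert v V - S \<subseteq> V" using sub by simp
      then show False using vin assms(2) by blast
    qed
    have l: "S \<in> alex_dual (insert v V) X \<longleftrightarrow> S \<subseteq> insert v V" unfolding d using e2 by simp
    have r: "S \<in> Lambda_on V (alex_dual V X) v \<longleftrightarrow> S \<subseteq> insert v V" unfolding mem using False by simp
    show ?thesis using l r by simp
  qed
qed

lemma Lambda_complex:
  assumes "is_complex V X" "v \<notin> V"
  shows "is_complex (insert v V) (Lambda_on V X v)"
proof -
  have down: "\<forall>F\<in>X. \<forall>G. G \<subseteq> F \<longrightarrow> G \<in> X" and fin: "finite V"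
    using assms(1) unfolding is_complex_def by auto
  have "T \<in> Lambda_on V X v" if "S \<in> Lambda_on V X v" "T \<subseteq> S" for S T
  proof -
    have S: "S \<subseteq> insert v V" "v \<notin> S \<or> S - {v} \<in> X" using that(1) unfolding Lambda_char[OF assms] by auto
    have "T - {v} \<subseteq> S - {v}" using that(2) by blast
    have "v \<notin> T \<or> T - {v} \<in> X"
    proof (cases "v \<in> S")
      case True
      then have "S - {v} \<in> X" using S(2) by simp
      then show ?thesis using down \<open>T - {v} \<subseteq> S - {v}\<close> by simp
    next
      case False then show ?thesis using that(2) by blast
    qed
    moreover have "T \<subseteq> insert v V" using S(1) that(2) by blast
    ultimately show ?thesis unfolding Lambda_char[OF assms] by simp
  qed
  moreover have "\<forall>F\<in>Lambda_on V X v. F \<subseteq> insert v V" unfolding Lambda_char[OF assms] by simp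
  ultimately show ?thesis unfolding is_complex_def using fin by simp
qed

lemma cone_complex:
  assumes "is_complex V X" "finite U"
  shows "is_complex (V \<union> U) (cone_on X U)"
proof -
  have down: "\<forall>F\<in>X. \<forall>G. G \<subseteq> F \<longrightarrow> G \<in> X" and fin: "finite V"
    using assms(1) unfolding is_complex_def by auto
  have "T \<in> cone_on X U" if "S \<in> cone_on X U" "T \<subseteq> S" for S T
  proof -
    have S: "S \<subseteq> V \<union> U" "S - U \<in> X" using that(1) unfolding cone_char[OF assms(1)] by auto
    have "T - U \<subseteq> S - U" using that(2) by blast
    then have "T - U \<in> X" using S(2) down by simp
    moreover have "T \<subseteq> V \<union> U" using S(1) that(2) by blast
    ultimately show ?thesis unfolding cone_char[OF assms(1)] by simp
  qed
  moreover have "\<forall>F\<in>cone_on X U. F \<subseteq> V \<union> U" unfolding cone_char[OF assms(1)] by simp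
  ultimately show ?thesis unfolding is_complex_def using fin assms(2) by simp
qed

lemma iso_complex:
  assumes "is_complex V C" "complex_iso V C W D"
  shows "is_complex W D"
proof -
  obtain f where f: "bij_betw f V W" "D = (\<lambda>F. f ` F) ` C" using assms(2) unfolding complex_iso_def by blast
  have sub: "\<forall>F\<in>C. F \<subseteq> V" and down: "\<forall>F\<in>C. \<forall>G. G \<subseteq> F \<longrightarrow> G \<in> C" and fin: "finite V"
    using assms(1) unfolding is_complex_def by auto
  have finW: "finite W" using bij_betw_finite f(1) fin by blast
  have fV: "f ` V = W" using f(1) by (simp add: bij_betw_def)
  have s: "F \<subseteq> W" if FD: "F \<in> D" for F
  proof -
    obtain F0 where F0: "F0 \<in> C" "F = f ` F0" using FD f(2) by blast
    have "F0 \<subseteq> V" using sub F0(1) by simp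
    then show ?thesis using F0(2) fV by blast
  qed
  have d: "G \<in> D" if FD: "F \<in> D" and GF: "G \<subseteq> F" for F G
  proof -
    obtain F0 where F0: "F0 \<in> C" "F = f ` F0" using FD f(2) by blast
    define H where "H = {x \<in> F0. f x \<in> G}"
    have "H \<subseteq> F0" unfolding H_def by auto
    then have "H \<in> C" using down F0(1) by simp
    moreover have "f ` H = G" unfolding H_def using GF F0(2) by auto
    ultimately show ?thesis using f(2) by (metis image_eqI)
  qed
  show ?thesis unfolding is_complex_def using finW s d by auto
qed

lemma disj_complex: "is_complex (disj_simplices_ground m n) (disj_simplices m n)"
  unfolding is_complex_def disj_simplices_ground_def disj_simplices_def by auto

lemma D_complex_complex: "is_complex (disj_simplices_ground m n) (D_complex m n)"
  unfolding D_complex_def by (rule dual_complex[OF disj_complex])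

lemma cv_finite: "finite (cone_vertices m n p)" unfolding cone_vertices_def by simp

lemma nuclear_complex: "nuclear V C \<Longrightarrow> is_complex V C"
proof (induction rule: nuclear.induct)
  case (iso V C W D) then show ?case using iso_complex by blast
next
  case (Lambda V C v) then show ?case using Lambda_complex by blast
next
  case (G V C v) then show ?case unfolding is_complex_def by auto
next
  case (cone_disj m n p) then show ?case using cone_complex[OF disj_complex cv_finite] by blast
next
  case (cone_D m n p) then show ?case using cone_complex[OF D_complex_complex cv_finite] by blast
next
  case (simplex k) then show ?case unfolding is_complex_def by auto
next
  case empty_simplex then show ?case unfolding is_complex_def by auto
next
  case void then show ?case unfolding is_complex_def by auto
qed

lemma iso_dual:
  assumes "is_complex V C" "complex_iso V C W D"
  shows "complex_iso V (alex_dual V C) W (alex_dual W D)"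
proof -
  obtain f where f: "bij_betw f V W" "D = (\<lambda>F. f ` F) ` C" using assms(2) unfolding complex_iso_def by blast
  have sub: "\<forall>F\<in>C. F \<subseteq> V" using assms(1) unfolding is_complex_def by auto
  have inj: "inj_on f V" and fV: "f ` V = W" using f(1) by (auto simp: bij_betw_def)
  have dif: "f ` (V - S) = W - f ` S" if "S \<subseteq> V" for S
    using inj_on_image_set_diff[OF inj, of V S] that fV by simp
  have "alex_dual W D = (\<lambda>F. f ` F) ` alex_dual V C"
  proof (rule set_eqI, rule iffI)
    fix T assume T: "T \<in> alex_dual W D"
    then have TW: "T \<subseteq> W" and TD: "W - T \<notin> D" unfolding alex_dual_def by auto
    define S where "S = {x \<in> V. f x \<in> T}"
    have SV: "S \<subseteq> V" unfolding S_def by auto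
    have fS: "f ` S = T" unfolding S_def using TW fV by auto
    have "V - S \<notin> C"
    proof
      assume "V - S \<in> C"
      then have "f ` (V - S) \<in> D" using f(2) by blast
      then show False using dif[OF SV] fS TD by simp
    qed
    then have "S \<in> alex_dual V C" using SV unfolding alex_dual_def by simp
    then show "T \<in> (\<lambda>F. f ` F) ` alex_dual V C" using fS by blast
  next
    fix T assume "T \<in> (\<lambda>F. f ` F) ` alex_dual V C"
    then obtain S where S: "S \<in> alex_dual V C" "T = f ` S" by blast
    then have SV: "S \<subseteq> V" and SC: "V - S \<notin> C" unfolding alex_dual_def by auto
    have TW: "T \<subseteq> W" using SV S(2) fV by blast
    have "W - T \<notin> D"
    proof
      assume "W - T \<in> D"
      then obtain F0 where F0: "F0 \<in> C" "W - T = f ` F0" using f(2) by blast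
      have "F0 \<subseteq> V" using sub F0(1) by simp
      moreover have "f ` (V - S) = f ` F0" using dif[OF SV] S(2) F0(2) by simp
      ultimately have "V - S = F0" using inj_on_image_eq_iff[OF inj, of "V - S" F0] by simp
      then show False using SC F0(1) by simp
    qed
    then show "T \<in> alex_dual W D" using TW unfolding alex_dual_def by simp
  qed
  then show ?thesis unfolding complex_iso_def using f(1) by (intro exI[of _ f]) simp
qed

lemma nuclear_void: "finite A \<Longrightarrow> nuclear A {}"
proof (induction A rule: finite_induct)
  case empty then show ?case by (rule nuclear.void)
next
  case (insert x F) then show ?case using nuclear.G by blast
qed

lemma nuclear_Pow: assumes "finite U" shows "nuclear U (Pow U)"
proof (cases "U = {}")
  case True then show ?thesis using nuclear.empty_simplex by simp
next
  case False
  then have "card U \<ge> 1" using assms by (simp add: Suc_leI card_gt_0_iff)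
  then obtain k where k: "card U = Suc k" by (metis Suc_le_D One_nat_def)
  have "card {0..k} = card U" using k by simp
  then obtain h where h: "bij_betw h {0..k} U" using finite_same_card_bij[of "{0..k}" U] assms by auto
  have "(\<lambda>F. h ` F) ` Pow {0..k} = Pow U" using h by (simp add: bij_betw_def image_Pow_surj)
  then have "complex_iso {0..k} (Pow {0..k}) U (Pow U)" unfolding complex_iso_def using h by (intro exI[of _ h]) simp
  then show ?thesis by (rule nuclear.iso[OF nuclear.simplex[of k]])
qed

lemma nuclear_K:
  assumes "finite W" "W \<noteq> {}" "finite U" "W \<inter> U = {}"
  shows "nuclear (W \<union> U) {S. S \<subseteq> W \<union> U \<and> \<not> W \<subseteq> S}"
  using assms
proof (induction W rule: finite_ne_induct)
  case (singleton w)
  have "{S. S \<subseteq> {w} \<union> U \<and> \<not> {w} \<subseteq> S} = Pow U"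
  proof (rule set_eqI)
    fix S
    have "w \<notin> U" using singleton by simp
    then show "S \<in> {S. S \<subseteq> {w} \<union> U \<and> \<not> {w} \<subseteq> S} \<longleftrightarrow> S \<in> Pow U" by blast
  qed
  moreover have "nuclear (insert w U) (Pow U)" using nuclear.G[OF nuclear_Pow[OF singleton(1)]] singleton(2) by blast
  ultimately show ?case by simp
next
  case (insert w W)
  have IH: "nuclear (W \<union> U) {S. S \<subseteq> W \<union> U \<and> \<not> W \<subseteq> S}" using insert by blast
  have wn: "w \<notin> W \<union> U" using insert by blast
  have cx: "is_complex (W \<union> U) {S. S \<subseteq> W \<union> U \<and> \<not> W \<subseteq> S}" using nuclear_complex[OF IH] .
  have "Lambda_on (W \<union> U) {S. S \<subseteq> W \<union> U \<and> \<not> W \<subseteq> S} w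
        = {S. S \<subseteq> insert w W \<union> U \<and> \<not> insert w W \<subseteq> S}"
    unfolding Lambda_char[OF cx wn]
  proof (rule set_eqI)
    fix S
    show "S \<in> {S. S \<subseteq> insert w (W \<union> U) \<and> (w \<notin> S \<or> S - {w} \<in> {S. S \<subseteq> W \<union> U \<and> \<not> W \<subseteq> S})}
       \<longleftrightarrow> S \<in> {S. S \<subseteq> insert w W \<union> U \<and> \<not> insert w W \<subseteq> S}"
    proof (cases "w \<in> S")
      case True
      have a: "S - {w} \<subseteq> W \<union> U \<longleftrightarrow> S \<subseteq> insert w (W \<union> U)" by blast
      have b: "W \<subseteq> S - {w} \<longleftrightarrow> W \<subseteq> S" using wn by blast
      have c: "insert w W \<subseteq> S \<longleftrightarrow> W \<subseteq> S" using True by simp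
      show ?thesis using True a b c by simp
    next
      case False
      then show ?thesis by simp
    qed
  qed
  then show ?case using nuclear.Lambda[OF IH wn] by simp
qed

lemma dual_disj_pow:
  assumes "A \<inter> B = {}"
  shows "alex_dual (A \<union> B) (Pow A \<union> Pow B) = {S. S \<subseteq> A \<union> B \<and> \<not> A \<subseteq> S \<and> \<not> B \<subseteq> S}"
proof (rule set_eqI)
  fix S
  have "S \<subseteq> A \<union> B \<Longrightarrow> (A \<union> B - S \<subseteq> A \<longleftrightarrow> B \<subseteq> S)" using assms by blast
  moreover have "S \<subseteq> A \<union> B \<Longrightarrow> (A \<union> B - S \<subseteq> B \<longleftrightarrow> A \<subseteq> S)" using assms by blast
  ultimately show "S \<in> alex_dual (A \<union> B) (Pow A \<union> Pow B) \<longleftrightarrow> S \<in> {S. S \<subseteq> A \<union> B \<and> \<not> A \<subseteq> S \<and> \<not> B \<subseteq> S}"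
    unfolding alex_dual_def by auto
qed

lemma cone_K:
  assumes "A \<inter> B = {}" "(A \<union> B) \<inter> U = {}" "A = {a}" "finite B" "B \<noteq> {}" "finite U"
  shows "nuclear (A \<union> B \<union> U) (cone_on (alex_dual (A \<union> B) (Pow A \<union> Pow B)) U)"
proof -
  have cx: "is_complex (A \<union> B) (alex_dual (A \<union> B) (Pow A \<union> Pow B))"
    by (rule dual_complex) (use assms in \<open>auto simp: is_complex_def\<close>)
  have mem: "S \<in> cone_on (alex_dual (A \<union> B) (Pow A \<union> Pow B)) U \<longleftrightarrow>
     S \<subseteq> A \<union> B \<union> U \<and> S - U \<subseteq> A \<union> B \<and> \<not> A \<subseteq> S - U \<and> \<not> B \<subseteq> S - U" for S
    unfolding cone_char[OF cx] by (simp add: dual_disj_pow[OF assms(1)])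
  have "cone_on (alex_dual (A \<union> B) (Pow A \<union> Pow B)) U = {S. S \<subseteq> B \<union> U \<and> \<not> B \<subseteq> S}"
  proof (rule set_eqI)
    fix S
    have aU: "a \<notin> U" "a \<notin> B" using assms by auto
    have BU: "B \<subseteq> S - U \<longleftrightarrow> B \<subseteq> S" using assms(2) by blast
    have aS: "A \<subseteq> S - U \<longleftrightarrow> a \<in> S" using aU assms(3) by blast
    have sub: "S \<subseteq> A \<union> B \<union> U \<and> a \<notin> S \<longleftrightarrow> S \<subseteq> B \<union> U" using assms(3) aU by blast
    have sub2: "S - U \<subseteq> A \<union> B \<longleftrightarrow> S \<subseteq> A \<union> B \<union> U" by blast
    show "S \<in> cone_on (alex_dual (A \<union> B) (Pow A \<union> Pow B)) U \<longleftrightarrow> S \<in> {S. S \<subseteq> B \<union> U \<and> \<not> B \<subseteq> S}"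
      unfolding mem using BU aS sub sub2 by auto
  qed
  moreover have "nuclear (insert a (B \<union> U)) {S. S \<subseteq> B \<union> U \<and> \<not> B \<subseteq> S}"
    by (rule nuclear.G[OF nuclear_K]) (use assms in auto)
  moreover have "A \<union> B \<union> U = insert a (B \<union> U)" using assms(3) by auto
  ultimately show ?thesis by simp
qed

lemma ground_split: "disj_simplices_ground m n = {0..m} \<union> {m+1..m+n+1}"
  unfolding disj_simplices_ground_def by auto

lemma ground_cv_disj: "disj_simplices_ground m n \<inter> cone_vertices m n p = {}"
  unfolding disj_simplices_ground_def cone_vertices_def by auto

lemma D_as_dual: "D_complex m n = alex_dual ({0..m} \<union> {m+1..m+n+1}) (Pow {0..m} \<union> Pow {m+1..m+n+1})"
  unfolding D_complex_def disj_simplices_def ground_split ..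

lemma cone_D0:
  assumes "m = 0 \<or> n = 0"
  shows "nuclear (disj_simplices_ground m n \<union> cone_vertices m n p) (cone_on (D_complex m n) (cone_vertices m n p))"
proof -
  let ?A = "{0..m}" and ?B = "{m+1..m+n+1}" and ?U = "cone_vertices m n p"
  have AB: "?A \<inter> ?B = {}" by auto
  have ABU: "(?A \<union> ?B) \<inter> ?U = {}" using ground_cv_disj[of m n p] unfolding ground_split .
  have fU: "finite ?U" by (rule cv_finite)
  show ?thesis
  proof (cases "m = 0")
    case True
    have "nuclear (?A \<union> ?B \<union> ?U) (cone_on (alex_dual (?A \<union> ?B) (Pow ?A \<union> Pow ?B)) ?U)"
      by (rule cone_K[OF AB ABU, of 0]) (use True fU in auto)
    then show ?thesis unfolding ground_split D_as_dual .
  next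
    case False
    then have n0: "n = 0" using assms by simp
    have "nuclear (?B \<union> ?A \<union> ?U) (cone_on (alex_dual (?B \<union> ?A) (Pow ?B \<union> Pow ?A)) ?U)"
      by (rule cone_K[of _ _ _ "m+1"]) (use AB ABU n0 fU in auto)
    then show ?thesis unfolding ground_split D_as_dual by (simp add: Un_commute)
  qed
qed

lemma main_dual: "nuclear V C \<Longrightarrow> nuclear V (alex_dual V C)"
proof (induction rule: nuclear.induct)
  case (iso V C W D)
  have cx: "is_complex V C" using nuclear_complex[OF iso.hyps(1)] .
  show ?case by (rule nuclear.iso[OF iso.IH iso_dual[OF cx iso.hyps(2)]])
next
  case (Lambda V C v)
  have cx: "is_complex V C" using nuclear_complex[OF Lambda.hyps(1)] .
  show ?case unfolding dual_Lambda[OF cx Lambda.hyps(2)] by (rule nuclear.G[OF Lambda.IH Lambda.hyps(2)])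
next
  case (G V C v)
  have cx: "is_complex V C" using nuclear_complex[OF G.hyps(1)] .
  show ?case unfolding dual_G[OF cx G.hyps(2)] by (rule nuclear.Lambda[OF G.IH G.hyps(2)])
next
  case (cone_disj m n p)
  have eq: "alex_dual (disj_simplices_ground m n \<union> cone_vertices m n p)
      (cone_on (disj_simplices m n) (cone_vertices m n p)) = cone_on (D_complex m n) (cone_vertices m n p)"
    unfolding D_complex_def by (rule dual_cone[OF disj_complex ground_cv_disj])
  show ?case
  proof (cases "m \<ge> 1 \<and> n \<ge> 1")
    case True
    then show ?thesis unfolding eq using nuclear.cone_D by blast
  next
    case False
    then have "m = 0 \<or> n = 0" by auto
    then show ?thesis unfolding eq by (rule cone_D0)
  qed
next
  case (cone_D m n p)
  have eq: "alex_dual (disj_simplices_ground m n \<union> cone_vertices m n p)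
      (cone_on (D_complex m n) (cone_vertices m n p)) = cone_on (disj_simplices m n) (cone_vertices m n p)"
    unfolding dual_cone[OF D_complex_complex ground_cv_disj]
    unfolding D_complex_def dual_dual[OF disj_complex] ..
  show ?case unfolding eq by (rule nuclear.cone_disj)
next
  case (simplex k)
  have "alex_dual {0..k} (Pow {0..k}) = {}" unfolding alex_dual_def by auto
  then show ?case using nuclear_void[of "{0..k}"] by simp
next
  case empty_simplex
  have "alex_dual {} {{}} = {}" unfolding alex_dual_def by auto
  then show ?case using nuclear.void by simp
next
  case void
  have "alex_dual {} {} = {{}}" unfolding alex_dual_def by auto
  then show ?case using nuclear.empty_simplex by simp
qed

theorem proposition6p2:
  assumes "is_complex V C"
    and "nuclear V C"
  shows "nuclear V (alex_dual V C)"
  using main_dual[OF assms(2)] .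

end
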